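(* Let $S$ be a finite nonempty set of positive integers, and fix integers $a,b,t\ge 1$ and $c\ge 0$. Let $X$ be a periodic independent set of $G(S)$, with blocks $(B_i)_{i\in\mathbb{Z}}$ and $t$-frames $(F_j)_{j\in\mathbb{Z}}$. Define the charge $\mu(B_i)=a|B_i|-b$. Let $d$ be an $S$-local discharging rule on blocks, defining $\mu^*(B_i)=\mu(B_i)+\sum_{j}d(B_j,B_i)$. Define $\nu^*(F_j)=\sum_{B_i\in F_j}\mu^*(B_i)$ for each $t$-frame $F_j$, and let $d'$ be an $S$-local discharging rule on $t$-frames, defining $\nu'(F_j)=\nu^*(F_j)+\sum_{i}d'(F_i,F_j)$. If $\nu'(F_j)\ge c$ for all $j$, then $\delta(X)\le\frac{at}{bt+c}$.
   Context: The distance graph $G(S)$ has vertex set $\mathbb{Z}$, $i,j$ adjacent iff $|i-j|\in S$; the density of $X\subseteq\mathbb{Z}$ is $\delta(X)=\limsup_{N\to\infty}\frac{|X\cap[-N,N]|}{2N+1}$; $X$ is periodic if $X+p=X$ for some $p\ge1$. For an independent set $X=\{\dots<x_{-1}<x_0<x_1<\dots\}$ indexed by $\mathbb{Z}$ in increasing order, the $i$-th block is $B_i=\{x_i,x_i+1,\dots,x_{i+1}-1\}$ (so $|B_i|=x_{i+1}-x_i$); the block structure of a sequence of consecutive blocks is the list of their sizes in order. A $t$-frame is $F_j=\{B_j,\dots,B_{j+t-1}\}$. A discharging rule on blocks is a function $d$ from ordered pairs of blocks to $\mathbb{Z}$ with $d(B_i,B_j)=-d(B_j,B_i)$; it is $S$-local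 if there is $m=m(S)$ such that $d(B_i,B_j)=0$ whenever $|x_i-x_j|>m$, and when $|x_i-x_j|\le m$, $d(B_i,B_j)$ depends only on the block structure of $B_{i-m},\dots,B_{i+m}$. A discharging rule on frames is a function $d'$ from ordered pairs of $t$-frames to $\mathbb{Z}$ with $d'(F_i,F_j)=-d'(F_j,F_i)$; it is $S$-local if there is $m'=m'(S)$ such that $d'(F_i,F_j)=0$ whenever $|i-j|>m'$, and when $|i-j|\le m'$, $d'(F_i,F_j)$ depends only on the block structure of the frames $F_{i-m'},\dots,F_{i+m'}$. *)

theory Defs
  imports Complex_Main "HOL-Library.Extended_Real"
begin

definition indep_dist :: "int set \<Rightarrow> int set \<Rightarrow> bool" where
  "indep_dist S X \<longleftrightarrow> (\<forall>u\<in>X. \<forall>v\<in>X. \<bar>u - v\<bar> \<notin> S)"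

definition periodic_set :: "int set \<Rightarrow> bool" where
  "periodic_set X \<longleftrightarrow> (\<exists>p::int. p \<ge> 1 \<and> (\<lambda>u. u + p) ` X = X)"

definition density :: "int set \<Rightarrow> ereal" where
  "density X = limsup (\<lambda>N::nat. ereal (real (card (X \<inter> {- int N .. int N})) / real (2 * N + 1)))"

text \<open>x enumerates X increasingly; block i is {x i, ..., x (i+1) - 1}.\<close>
definition bsize :: "(int \<Rightarrow> int) \<Rightarrow> int \<Rightarrow> int" where
  "bsize x i = x (i + 1) - x i"

definition local_block_rule :: "int set \<Rightarrow> (int \<Rightarrow> int) \<Rightarrow> (int \<Rightarrow> int \<Rightarrow> int) \<Rightarrow> bool" where
  "local_block_rule S x d \<longleftrightarrow>
     (\<forall>i j. d i j = - d j i) \<and>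
     (\<exists>m::int. m \<ge> 0 \<and> (\<exists>D. \<forall>i j.
        (\<bar>x i - x j\<bar> > m \<longrightarrow> d i j = 0) \<and>
        (\<bar>x i - x j\<bar> \<le> m \<longrightarrow> d i j = D (map (bsize x) [i - m .. i + m]) (j - i))))"

text \<open>Block structure of the t-frame F_k = {B_k, ..., B_(k+t-1)}.\<close>
definition frame_struct :: "(int \<Rightarrow> int) \<Rightarrow> int \<Rightarrow> int \<Rightarrow> int list" where
  "frame_struct x t k = map (bsize x) [k .. k + t - 1]"

definition local_frame_rule :: "int set \<Rightarrow> (int \<Rightarrow> int) \<Rightarrow> int \<Rightarrow> (int \<Rightarrow> int \<Rightarrow> int) \<Rightarrow> bool" where
  "local_frame_rule S x t d' \<longleftrightarrow>
     (\<forall>i j. d' i j = - d' j i) \<and>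
     (\<exists>m'::int. m' \<ge> 0 \<and> (\<exists>D'. \<forall>i j.
        (\<bar>i - j\<bar> > m' \<longrightarrow> d' i j = 0) \<and>
        (\<bar>i - j\<bar> \<le> m' \<longrightarrow> d' i j = D' (map (frame_struct x t) [i - m' .. i + m']) (j - i))))"

definition zsum :: "(int \<Rightarrow> int) \<Rightarrow> int" where
  "zsum f = sum f {j. f j \<noteq> 0}"

definition mu_star :: "int \<Rightarrow> int \<Rightarrow> (int \<Rightarrow> int) \<Rightarrow> (int \<Rightarrow> int \<Rightarrow> int) \<Rightarrow> int \<Rightarrow> int" where
  "mu_star a b x d i = a * bsize x i - b + zsum (\<lambda>j. d j i)"

definition nu_star :: "int \<Rightarrow> int \<Rightarrow> int \<Rightarrow> (int \<Rightarrow> int) \<Rightarrow> (int \<Rightarrow> int \<Rightarrow> int) \<Rightarrow> int \<Rightarrow> int" where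
  "nu_star a b t x d j = (\<Sum>i\<in>{j .. j + t - 1}. mu_star a b x d i)"

definition nu' :: "int \<Rightarrow> int \<Rightarrow> int \<Rightarrow> (int \<Rightarrow> int) \<Rightarrow> (int \<Rightarrow> int \<Rightarrow> int) \<Rightarrow> (int \<Rightarrow> int \<Rightarrow> int) \<Rightarrow> int \<Rightarrow> int" where
  "nu' a b t x d d' j = nu_star a b t x d j + zsum (\<lambda>i. d' i j)"

end

theory Submission imports Defs begin

lemma map_upto_shift:
  assumes "\<And>l. f (l + k) = f l"
  shows "map f [a+k..b+k] = map f [a..b]"
proof (rule nth_equalityI)
  show "length (map f [a+k..b+k]) = length (map f [a..b])" by simp
  fix n assume "n < length (map f [a+k..b+k])"
  hence n: "a + int n \<le> b" by simp
  have "map f [a+k..b+k] ! n = f (a + int n + k)" using n by (simp add: algebra_simps)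
  also have "\<dots> = f (a + int n)" by (rule assms)
  also have "\<dots> = map f [a..b] ! n" using n by simp
  finally show "map f [a+k..b+k] ! n = map f [a..b] ! n" .
qed

lemma shift_sum:
  fixes \<phi> :: "int \<Rightarrow> int"
  assumes per: "\<And>j. \<phi> (j + int K) = \<phi> j"
  shows "(\<Sum>j<K. \<phi> (int j + a)) = (\<Sum>j<K. \<phi> (int j))"
proof -
  have step: "(\<Sum>j<K. \<phi> (int j + (a+1))) = (\<Sum>j<K. \<phi> (int j + a))" for a
  proof -
    have "(\<Sum>j<Suc K. \<phi> (int j + a)) = \<phi> a + (\<Sum>j<K. \<phi> (int (Suc j) + a))"
      by (subst sum.lessThan_Suc_shift) simp
    moreover have "(\<Sum>j<Suc K. \<phi> (int j + a)) = (\<Sum>j<K. \<phi> (int j + a)) + \<phi> (int K + a)"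
      by simp
    moreover have "\<phi> (int K + a) = \<phi> a" using per[of a] by (simp add: add.commute)
    ultimately show ?thesis by (simp add: algebra_simps)
  qed
  show ?thesis
  proof (induction a rule: int_induct[where k=0])
    case base then show ?case by simp
  next
    case (step1 i) then show ?case using step[of i] by simp
  next
    case (step2 i) then show ?case using step[of "i-1"] by simp
  qed
qed

lemma zsum_window:
  fixes g :: "int \<Rightarrow> int"
  assumes "\<And>j. \<bar>j - i\<bar> > M \<Longrightarrow> g j = 0"
  shows "zsum g = (\<Sum>s\<in>{-M..M}. g (i + s))"
proof -
  have "zsum g = sum g {i-M..i+M}"
    unfolding zsum_def
  proof (rule sum.mono_neutral_left)
    show "{j. g j \<noteq> 0} \<subseteq> {i - M..i + M}"
    proof
      fix j assume "j \<in> {j. g j \<noteq> 0}"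
      hence "\<not> \<bar>j - i\<bar> > M" using assms by auto
      thus "j \<in> {i - M..i + M}" by auto
    qed
  qed auto
  also have "\<dots> = sum (g \<circ> (\<lambda>s. i + s)) {-M..M}"
  proof -
    have "{i-M..i+M} = (\<lambda>s. i + s) ` {-M..M}"
      by (auto simp: image_iff intro!: bexI[where x="_ - i"])
    moreover have "sum g ((\<lambda>s. i + s) ` {-M..M}) = sum (g \<circ> (\<lambda>s. i + s)) {-M..M}"
      by (rule sum.reindex) (simp add: inj_on_def)
    ultimately show ?thesis by (simp add: add.commute)
  qed
  finally show ?thesis by simp
qed

lemma antisym_zero:
  fixes f :: "int \<Rightarrow> int \<Rightarrow> int"
  assumes anti: "\<And>i j. f i j = - f j i"
    and per: "\<And>i j. f (i + int K) (j + int K) = f i j"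
  shows "(\<Sum>j<K. \<Sum>s\<in>{-M..M}. f (int j + s) (int j)) = 0"
proof -
  define h where "h s = (\<Sum>j<K. f (int j + s) (int j))" for s
  have hn: "h (-s) = - h s" for s
  proof -
    define \<phi> where "\<phi> j = f (j + s) j" for j
    have p: "\<phi> (j + int K) = \<phi> j" for j unfolding \<phi>_def using per[of "j+s" j] by (simp add: algebra_simps)
    have "h (-s) = (\<Sum>j<K. - f (int j) (int j - s))" unfolding h_def
      by (rule sum.cong) (simp, metis anti diff_conv_add_uminus)
    also have "\<dots> = - (\<Sum>j<K. \<phi> (int j + (-s)))" unfolding \<phi>_def by (simp add: sum_negf)
    also have "\<dots> = - (\<Sum>j<K. \<phi> (int j))" using shift_sum[of \<phi> K "-s", OF p] by simp
    also have "\<dots> = - h s" unfolding h_def \<phi>_def ..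
    finally show ?thesis .
  qed
  have "(\<Sum>j<K. \<Sum>s\<in>{-M..M}. f (int j + s) (int j)) = (\<Sum>s\<in>{-M..M}. h s)"
    unfolding h_def by (rule sum.swap)
  moreover have "(\<Sum>s\<in>{-M..M}. h s) = (\<Sum>s\<in>{-M..M}. h (-s))"
    by (rule sum.reindex_bij_witness[where i=uminus and j=uminus]) simp_all
  moreover have "(\<Sum>s\<in>{-M..M}. h (-s)) = - (\<Sum>s\<in>{-M..M}. h s)"
    unfolding hn by (rule sum_negf)
  ultimately show ?thesis by linarith
qed

lemma sm_diff:
  fixes x :: "int \<Rightarrow> int"
  assumes "strict_mono x" "i \<le> j"
  shows "j - i \<le> x j - x i"
  using assms(2)
proof (induction j rule: int_ge_induct)
  case base then show ?case by simp
next
  case (step j)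
  have "x j < x (j+1)" using assms(1) by (simp add: strict_mono_less)
  then show ?case using step by linarith
qed

lemma sm_abs:
  fixes x :: "int \<Rightarrow> int"
  assumes "strict_mono x"
  shows "\<bar>j - i\<bar> \<le> \<bar>x j - x i\<bar>"
  using sm_diff[OF assms, of i j] sm_diff[OF assms, of j i] by (cases "i \<le> j") auto

lemma shift_exists:
  fixes x :: "int \<Rightarrow> int" and p :: int
  assumes sm: "strict_mono x" and rx: "range x = X" and p1: "p \<ge> 1"
    and px: "(\<lambda>u. u + p) ` X = X"
  shows "\<exists>K::nat. K \<ge> 1 \<and> (\<forall>i. x (i + int K) = x i + p)"
proof -
  have up: "\<exists>l. x l = x i + p" for i
  proof -
    have "x i + p \<in> (\<lambda>u. u + p) ` X" using rx by auto
    then show ?thesis using px rx by auto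
  qed
  have down: "\<exists>l. x l + p = x j" for j
  proof -
    have "x j \<in> (\<lambda>u. u + p) ` X" using px rx by auto
    then show ?thesis using rx by auto
  qed
  obtain \<sigma> where sig: "\<And>i. x (\<sigma> i) = x i + p" using up by metis
  have smono: "i < j \<Longrightarrow> \<sigma> i < \<sigma> j" for i j
    using sig[of i] sig[of j] sm by (metis add_less_cancel_right strict_mono_less)
  have ssurj: "\<exists>l. \<sigma> l = j" for j
  proof -
    obtain l where "x l + p = x j" using down by blast
    hence "x (\<sigma> l) = x j" using sig by simp
    hence "\<sigma> l = j" using sm by (simp add: strict_mono_eq)
    thus ?thesis by blast
  qed
  have s1: "\<sigma> (i+1) = \<sigma> i + 1" for i
  proof (rule ccontr)
    assume ne: "\<sigma> (i+1) \<noteq> \<sigma> i + 1"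
    have "\<sigma> i < \<sigma> (i+1)" by (rule smono) simp
    with ne have lt: "\<sigma> i + 1 < \<sigma> (i+1)" by simp
    obtain l where l: "\<sigma> l = \<sigma> i + 1" using ssurj by blast
    have "i < l" using l smono by (metis less_add_one linorder_neqE_linordered_idom order_less_asym' order_less_not_sym)
    moreover have "l < i + 1" using l lt smono by (metis linorder_neqE_linordered_idom order_less_asym)
    ultimately show False by simp
  qed
  have sform: "\<sigma> i = i + \<sigma> 0" for i
  proof (induction i rule: int_induct[where k=0])
    case base then show ?case by simp
  next
    case (step1 i) then show ?case using s1[of i] by simp
  next
    case (step2 i) then show ?case using s1[of "i-1"] by simp
  qed
  have "x (\<sigma> 0) > x 0" using sig[of 0] p1 by simp
  hence pos: "\<sigma> 0 > 0" using sm by (simp add: strict_mono_less)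
  show ?thesis
  proof (rule exI[where x="nat (\<sigma> 0)"], intro conjI allI)
    show "1 \<le> nat (\<sigma> 0)" using pos by simp
    fix i show "x (i + int (nat (\<sigma> 0))) = x i + p" using pos sig[of i] sform[of i] by simp
  qed
qed

lemma shift_mult:
  fixes x :: "int \<Rightarrow> int"
  assumes "\<And>i. x (i + k) = x i + p"
  shows "x (i + k * q) = x i + q * p"
proof (induction q rule: int_induct[where k=0])
  case base then show ?case by simp
next
  case (step1 q)
  have "x (i + k * (q+1)) = x (i + k*q + k)" by (simp add: algebra_simps)
  also have "\<dots> = x (i + k*q) + p" by (rule assms)
  finally show ?case using step1 by (simp add: algebra_simps)
next
  case (step2 q)
  have "x (i + k * q) = x (i + k*(q - 1) + k)" by (simp add: algebra_simps)
  also have "\<dots> = x (i + k*(q-1)) + p" by (rule assms)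
  finally show ?case using step2 by (simp add: algebra_simps)
qed

lemma sum_interval:
  fixes g :: "int \<Rightarrow> int"
  shows "sum g {i..i+L} = (\<Sum>s\<in>{0..L}. g (i + s))"
  by (rule sum.reindex_bij_witness[where i="\<lambda>s. i + s" and j="\<lambda>l. l - i"]) auto

lemma telescope:
  "(\<Sum>j<n. bsize x (int j)) = x (int n) - x 0"
  by (induction n) (simp_all add: bsize_def algebra_simps)

lemma card_bound:
  fixes x :: "int \<Rightarrow> int" and p :: int and K N :: nat
  assumes sm: "strict_mono x" and rx: "range x = X"
    and sh: "\<And>i. x (i + int K) = x i + p" and K1: "K \<ge> 1" and p1: "p \<ge> 1"
  shows "int (card (X \<inter> {- int N..int N})) \<le> int K * (2 * int N div p + 1)"
proof -
  define I where "I = {i. x i \<in> {- int N..int N}}"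
  have XI: "X \<inter> {- int N..int N} = x ` I" using rx unfolding I_def by auto
  have sub: "I \<subseteq> {-(int N + \<bar>x 0\<bar>)..int N + \<bar>x 0\<bar>}"
  proof
    fix i assume "i \<in> I"
    hence "\<bar>x i\<bar> \<le> int N" unfolding I_def by auto
    moreover have "\<bar>i - 0\<bar> \<le> \<bar>x i - x 0\<bar>" by (rule sm_abs[OF sm])
    ultimately show "i \<in> {-(int N + \<bar>x 0\<bar>)..int N + \<bar>x 0\<bar>}" by auto
  qed
  hence finI: "finite I" by (rule finite_subset) simp
  have c1: "card (x ` I) \<le> card I" using finI by (rule card_image_le)
  have dnn: "2 * int N div p \<ge> 0" using p1 by (simp add: pos_imp_zdiv_nonneg_iff)
  show ?thesis
  proof (cases "I = {}")
    case True
    then show ?thesis using XI dnn K1 by simp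
  next
    case False
    define m0 where "m0 = Min I"
    have m0I: "m0 \<in> I" using finI False unfolding m0_def by simp
    have m0le: "\<And>i. i \<in> I \<Longrightarrow> m0 \<le> i" using finI unfolding m0_def by simp
    define L where "L = int K * (2 * int N div p + 1) - 1"
    have iL: "i \<le> m0 + L" if iI: "i \<in> I" for i
    proof -
      define q where "q = (i - m0) div int K"
      define r where "r = (i - m0) mod int K"
      have Kpos: "int K > 0" using K1 by simp
      have qr: "i - m0 = int K * q + r" unfolding q_def r_def by simp
      have r0: "0 \<le> r" "r < int K" unfolding r_def using Kpos by simp_all
      have hm: "x (m0 + int K * q) = x m0 + q * p" by (rule shift_mult[where k="int K"]) (rule sh)
      have "x (m0 + int K * q) \<le> x i"
        using sm qr r0 by (simp add: strict_mono_less_eq)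
      moreover have "x i \<le> int N" "- int N \<le> x m0" using iI m0I unfolding I_def by auto
      ultimately have qp: "q * p \<le> 2 * int N" using hm by linarith
      have "q = (q * p) div p" using p1 by simp
      also have "\<dots> \<le> 2 * int N div p" using zdiv_mono1[OF qp, of p] p1 by linarith
      finally have qle: "q \<le> 2 * int N div p" .
      have "int K * q \<le> int K * (2 * int N div p)" using qle Kpos by simp
      moreover have "int K * (2 * int N div p + 1) = int K * (2 * int N div p) + int K" by (simp add: algebra_simps)
      ultimately show ?thesis using qr r0 unfolding L_def by linarith
    qed
    have "I \<subseteq> {m0..m0+L}" using iL m0le by auto
    hence "card I \<le> card {m0..m0+L}" by (rule card_mono[rotated]) simp
    also have "\<dots> = nat (L + 1)" by simp
    finally have "int (card I) \<le> int (nat (L + 1))" by (simp only: of_nat_le_iff)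
    moreover have "L + 1 \<ge> 0" unfolding L_def using dnn by simp
    ultimately have "int (card I) \<le> L + 1" by simp
    then show ?thesis using XI c1 unfolding L_def by simp
  qed
qed

lemma density_le:
  fixes p :: int and K :: nat
  assumes cb: "\<And>N::nat. int (card (X \<inter> {- int N..int N})) \<le> int K * (2 * int N div p + 1)"
    and p1: "p \<ge> 1"
  shows "density X \<le> ereal (real K / real_of_int p)"
proof -
  define g where "g N = ereal (real K / real_of_int p + real K / real (Suc N))" for N
  have fg: "ereal (real (card (X \<inter> {- int N .. int N})) / real (2 * N + 1)) \<le> g N" for N
  proof -
    define n where "n = real N"
    define Kr where "Kr = real K"
    define pr where "pr = real_of_int p"
    have pr1: "pr \<ge> 1" unfolding pr_def using p1 by simp
    have n0: "n \<ge> 0" unfolding n_def by simp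
    have K0: "Kr \<ge> 0" unfolding Kr_def by simp
    have "real (card (X \<inter> {- int N .. int N})) \<le> Kr * (real_of_int (2 * int N div p) + 1)"
    proof -
      have "real_of_int (int (card (X \<inter> {- int N..int N}))) \<le> real_of_int (int K * (2 * int N div p + 1))"
        using cb[of N] by (simp only: of_int_le_iff)
      thus ?thesis unfolding Kr_def by simp
    qed
    also have "\<dots> \<le> Kr * (2 * n / pr + 1)"
      using real_of_int_div4[of "2 * int N" p] K0 unfolding n_def pr_def
      by (intro mult_left_mono) auto
    finally have c: "real (card (X \<inter> {- int N .. int N})) \<le> Kr * (2 * n / pr + 1)" .
    have "real (card (X \<inter> {- int N .. int N})) / real (2 * N + 1) \<le> Kr * (2 * n / pr + 1) / (2*n+1)"
    proof -
      have "real (2 * N + 1) = 2*n+1" unfolding n_def by simp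
      moreover have "real (card (X \<inter> {- int N .. int N})) / real (2 * N + 1) \<le> Kr * (2 * n / pr + 1) / real (2 * N + 1)"
        using c by (intro divide_right_mono) auto
      ultimately show ?thesis by metis
    qed
    also have "\<dots> = Kr / pr * (2*n/(2*n+1)) + Kr / (2*n+1)"
      by (simp add: distrib_left add_divide_distrib)
    also have "\<dots> \<le> Kr / pr * 1 + Kr / (n + 1)"
    proof (rule add_mono)
      show "Kr / pr * (2*n/(2*n+1)) \<le> Kr / pr * 1"
        using n0 pr1 K0 by (intro mult_left_mono) auto
      show "Kr / (2*n+1) \<le> Kr / (n+1)"
        using n0 K0 by (intro divide_left_mono) auto
    qed
    finally show ?thesis unfolding g_def Kr_def pr_def n_def by (simp add: add.commute)
  qed
  have lim: "g \<longlonglongrightarrow> ereal (real K / real_of_int p)"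
  proof -
    have "(\<lambda>N. real K / real (Suc N)) \<longlonglongrightarrow> 0"
      using LIMSEQ_Suc[OF lim_const_over_n[of "real K"]] by simp
    hence "(\<lambda>N. real K / real_of_int p + real K / real (Suc N)) \<longlonglongrightarrow> real K / real_of_int p + 0"
      by (intro tendsto_intros)
    thus ?thesis unfolding g_def by (intro tendsto_ereal) simp
  qed
  have "density X \<le> limsup g"
    unfolding density_def by (intro Limsup_mono always_eventually allI fg)
  also have "limsup g = ereal (real K / real_of_int p)"
    by (rule lim_imp_Limsup) (simp_all add: lim)
  finally show ?thesis .
qed

theorem lemma21:
  fixes S X :: "int set" and a b t c :: int
    and x :: "int \<Rightarrow> int" and d d' :: "int \<Rightarrow> int \<Rightarrow> int"
  assumes "finite S" and "S \<noteq> {}" and "\<forall>s\<in>S. s > 0"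
    and "a \<ge> 1" and "b \<ge> 1" and "t \<ge> 1" and "c \<ge> 0"
    and "indep_dist S X" and "periodic_set X"
    and "strict_mono x" and "range x = X"
    and "local_block_rule S x d"
    and "local_frame_rule S x t d'"
    and "\<forall>j. nu' a b t x d d' j \<ge> c"
  shows "density X \<le> ereal (real_of_int (a * t) / real_of_int (b * t + c))"
proof -
  note sm = assms(10) and rx = assms(11)
  obtain p where p1: "p \<ge> 1" and px: "(\<lambda>u. u + p) ` X = X"
    using assms(9) unfolding periodic_set_def by blast
  obtain K :: nat where K1: "K \<ge> 1" and shA: "\<forall>i. x (i + int K) = x i + p"
    using shift_exists[OF sm rx p1 px] by blast
  have sh: "\<And>i. x (i + int K) = x i + p" using shA by blast
  have bper: "\<And>l. bsize x (l + int K) = bsize x l"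
  proof -
    fix l
    have "x (l + int K + 1) = x (l + 1) + p" using sh[of "l+1"] by (simp add: algebra_simps)
    thus "bsize x (l + int K) = bsize x l" unfolding bsize_def using sh[of l] by simp
  qed
  obtain m D where danti: "\<And>i j. d i j = - d j i" and dD: "\<And>i j.
        (\<bar>x i - x j\<bar> > m \<longrightarrow> d i j = 0) \<and>
        (\<bar>x i - x j\<bar> \<le> m \<longrightarrow> d i j = D (map (bsize x) [i - m .. i + m]) (j - i))"
    using assms(12) unfolding local_block_rule_def by blast
  have dzero: "d i j = 0" if "\<bar>i - j\<bar> > m" for i j
    using dD[of i j] sm_abs[OF sm, of i j] that by (simp add: abs_minus_commute)
  have dper: "d (i + int K) (j + int K) = d i j" for i j
  proof -
    have xe: "x (i + int K) - x (j + int K) = x i - x j" using sh[of i] sh[of j] by simp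
    have me: "map (bsize x) [i + int K - m .. i + int K + m] = map (bsize x) [i - m .. i + m]"
      using map_upto_shift[of "bsize x" "int K" "i - m" "i + m", OF bper] by (simp add: algebra_simps)
    show ?thesis
    proof (cases "\<bar>x i - x j\<bar> > m")
      case True then show ?thesis using dD[of i j] dD[of "i + int K" "j + int K"] xe by simp
    next
      case False then show ?thesis using dD[of i j] dD[of "i + int K" "j + int K"] xe me by simp
    qed
  qed
  obtain m' D' where d'anti: "\<And>i j. d' i j = - d' j i" and d'D: "\<And>i j.
        (\<bar>i - j\<bar> > m' \<longrightarrow> d' i j = 0) \<and>
        (\<bar>i - j\<bar> \<le> m' \<longrightarrow> d' i j = D' (map (frame_struct x t) [i - m' .. i + m']) (j - i))"
    using assms(13) unfolding local_frame_rule_def by blast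
  have fper: "\<And>l. frame_struct x t (l + int K) = frame_struct x t l"
    unfolding frame_struct_def
    using map_upto_shift[of "bsize x" "int K", OF bper] by (metis add.commute add.left_commute diff_add_eq)
  have d'per: "d' (i + int K) (j + int K) = d' i j" for i j
  proof -
    have me: "map (frame_struct x t) [i + int K - m' .. i + int K + m'] = map (frame_struct x t) [i - m' .. i + m']"
      using map_upto_shift[of "frame_struct x t" "int K" "i - m'" "i + m'", OF fper] by (simp add: algebra_simps)
    show ?thesis using d'D[of i j] d'D[of "i + int K" "j + int K"] me by (cases "m' < \<bar>i - j\<bar>") auto
  qed
  define \<mu> where "\<mu> i = mu_star a b x d i" for i
  have muform: "\<mu> i = a * bsize x i - b + (\<Sum>s\<in>{-m..m}. d (i + s) i)" for i
  proof -
    have "zsum (\<lambda>j. d j i) = (\<Sum>s\<in>{-m..m}. d (i + s) i)"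
      by (rule zsum_window) (rule dzero)
    thus ?thesis unfolding \<mu>_def mu_star_def by simp
  qed
  have muper: "\<mu> (i + int K) = \<mu> i" for i
  proof -
    have "d (i + int K + s) (i + int K) = d (i + s) i" for s
      using dper[of "i + s" i] by (simp add: algebra_simps)
    thus ?thesis unfolding muform bper by simp
  qed
  have nuform: "nu' a b t x d d' j = (\<Sum>s\<in>{0..t-1}. \<mu> (j + s)) + (\<Sum>s\<in>{-m'..m'}. d' (j + s) j)" for j
  proof -
    have "zsum (\<lambda>i. d' i j) = (\<Sum>s\<in>{-m'..m'}. d' (j + s) j)"
      by (rule zsum_window) (use d'D in auto)
    moreover have "nu_star a b t x d j = (\<Sum>s\<in>{0..t-1}. \<mu> (j + s))"
    proof -
      have e: "j + t - 1 = j + (t - 1)" by simp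
      show ?thesis unfolding nu_star_def \<mu>_def e by (rule sum_interval)
    qed
    ultimately show ?thesis unfolding nu'_def by simp
  qed
  have S1: "(\<Sum>j<K. nu' a b t x d d' (int j)) \<ge> int K * c"
  proof -
    have "(\<Sum>j<K. c) \<le> (\<Sum>j<K. nu' a b t x d d' (int j))"
      using assms(14) by (intro sum_mono) auto
    thus ?thesis by simp
  qed
  have S2: "(\<Sum>j<K. \<Sum>s\<in>{-m'..m'}. d' (int j + s) (int j)) = 0"
    by (rule antisym_zero) (rule d'anti, rule d'per)
  have S3: "(\<Sum>j<K. \<Sum>s\<in>{0..t-1}. \<mu> (int j + s)) = t * (\<Sum>j<K. \<mu> (int j))"
  proof -
    have "(\<Sum>j<K. \<Sum>s\<in>{0..t-1}. \<mu> (int j + s)) = (\<Sum>s\<in>{0..t-1}. \<Sum>j<K. \<mu> (int j + s))"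
      by (rule sum.swap)
    also have "\<dots> = (\<Sum>s\<in>{0..t-1}. \<Sum>j<K. \<mu> (int j))"
      by (rule sum.cong[OF refl]) (rule shift_sum, rule muper)
    also have "\<dots> = t * (\<Sum>j<K. \<mu> (int j))" using assms(6) by simp
    finally show ?thesis .
  qed
  have S4: "(\<Sum>j<K. \<mu> (int j)) = a * p - b * int K"
  proof -
    have "(\<Sum>j<K. \<mu> (int j)) = a * (\<Sum>j<K. bsize x (int j)) - (\<Sum>j<K. b) + (\<Sum>j<K. \<Sum>s\<in>{-m..m}. d (int j + s) (int j))"
      unfolding muform by (simp add: sum.distrib sum_subtractf sum_distrib_left)
    also have "(\<Sum>j<K. \<Sum>s\<in>{-m..m}. d (int j + s) (int j)) = 0"
      by (rule antisym_zero) (rule danti, rule dper)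
    also have "(\<Sum>j<K. bsize x (int j)) = p" using telescope[of x K] sh[of 0] by simp
    finally show ?thesis by simp
  qed
  have "(\<Sum>j<K. nu' a b t x d d' (int j)) = t * (a * p - b * int K)"
    unfolding nuform sum.distrib S2 S3 S4 by simp
  with S1 have key: "int K * (b * t + c) \<le> a * t * p" by (simp add: algebra_simps)
  have cb: "int (card (X \<inter> {- int N..int N})) \<le> int K * (2 * int N div p + 1)" for N
    by (rule card_bound[OF sm rx sh K1 p1])
  have "density X \<le> ereal (real K / real_of_int p)" by (rule density_le[OF cb p1])
  also have "real K / real_of_int p \<le> real_of_int (a * t) / real_of_int (b * t + c)"
  proof -
    have bt: "b * t + c > 0" using assms(5,6,7) by (simp add: add_pos_nonneg)
    have "real_of_int (int K * (b * t + c)) \<le> real_of_int (a * t * p)" using key by (simp only: of_int_le_iff)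
    hence h: "real K * real_of_int (b * t + c) \<le> real_of_int (a * t) * real_of_int p" by (simp only: of_int_mult of_int_of_nat_eq mult.assoc)
    have gen: "k * B \<le> A * P \<Longrightarrow> B > 0 \<Longrightarrow> P > 0 \<Longrightarrow> k / P \<le> A / B" for k A B P :: real
      by (simp add: divide_simps)
    have btr: "real_of_int (b * t + c) > 0" using bt by (simp only: of_int_0_less_iff)
    show ?thesis by (rule gen[OF h btr]) (use p1 in simp)
  qed
  hence "ereal (real K / real_of_int p) \<le> ereal (real_of_int (a * t) / real_of_int (b * t + c))" by simp
  finally show ?thesis .
qed

end
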